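(* Let $G$ be a graph of order $n\ge 1$. Then $$\frac{n^2+n+2}{2}\le d(G)\le 2^n.$$ The left equality holds if and only if $G\cong K_{n_1,n_2,\ldots,n_k}$ is a complete multipartite graph with $n_i\le 2$ for all $1\le i\le k$ and $n_1+\cdots+n_k=n$. The right equality holds if and only if $G\cong sK_1\cup tK_2$, a disjoint union of $s$ isolated vertices and $t$ disjoint edges, with $s+2t=n$.
   Context: All graphs are finite, simple and undirected. A subset $D\subseteq V(G)$ is a dissociation set of $G$ if the induced subgraph $G[D]$ has maximum degree at most $1$; the empty set is a dissociation set. $d(G)$ denotes the total number of dissociation sets of $G$, including the empty set. In particular, the graph with no vertices has $d=1$. *)

theory Defs
  imports Complex_Main "HOL-Library.Disjoint_Sets"
begin

definition simple_graph :: "'a set \<Rightarrow> ('a \<Rightarrow> 'a \<Rightarrow> bool) \<Rightarrow> bool" where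
  "simple_graph V E \<longleftrightarrow> finite V \<and>
     (\<forall>u v. E u v \<longrightarrow> u \<in> V \<and> v \<in> V) \<and>
     (\<forall>u v. E u v \<longrightarrow> E v u) \<and> (\<forall>v. \<not> E v v)"

definition dissociation_set :: "'a set \<Rightarrow> ('a \<Rightarrow> 'a \<Rightarrow> bool) \<Rightarrow> 'a set \<Rightarrow> bool" where
  "dissociation_set V E D \<longleftrightarrow> D \<subseteq> V \<and> (\<forall>v\<in>D. card {u\<in>D. E v u} \<le> 1)"

definition diss_count :: "'a set \<Rightarrow> ('a \<Rightarrow> 'a \<Rightarrow> bool) \<Rightarrow> nat" where
  "diss_count V E = card {D. dissociation_set V E D}"

text \<open>G is (isomorphic to) a complete multipartite graph K_{n_1,...,n_k} with all
  n_i \<le> 2: V is partitioned into nonempty parts of size at most 2 and two vertices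
  are adjacent iff they lie in different parts.\<close>
definition complete_multipartite_le2 :: "'a set \<Rightarrow> ('a \<Rightarrow> 'a \<Rightarrow> bool) \<Rightarrow> bool" where
  "complete_multipartite_le2 V E \<longleftrightarrow>
     (\<exists>P. partition_on V P \<and> (\<forall>X\<in>P. card X \<le> 2) \<and>
          (\<forall>u\<in>V. \<forall>v\<in>V. E u v \<longleftrightarrow> (\<exists>X\<in>P. u \<in> X \<and> v \<notin> X)))"

text \<open>G is (isomorphic to) sK_1 \<union> tK_2: V is partitioned into parts of size 1 or 2
  and two vertices are adjacent iff they are distinct and lie in the same part.\<close>
definition union_K1_K2 :: "'a set \<Rightarrow> ('a \<Rightarrow> 'a \<Rightarrow> bool) \<Rightarrow> bool" where
  "union_K1_K2 V E \<longleftrightarrow>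
     (\<exists>P. partition_on V P \<and> (\<forall>X\<in>P. card X = 1 \<or> card X = 2) \<and>
          (\<forall>u\<in>V. \<forall>v\<in>V. E u v \<longleftrightarrow> (u \<noteq> v \<and> (\<exists>X\<in>P. u \<in> X \<and> v \<in> X))))"

end

theory Submission
  imports Defs
begin

lemma nbhd_single:
  assumes fin: "finite V" and sym: "\<forall>u v. R u v \<longrightarrow> R v u"
    and deg: "\<forall>v\<in>V. card {u\<in>V. R v u} \<le> 1"
    and x: "x \<in> V" and w: "w \<in> V" and r: "R x w"
  shows "{u\<in>V. R x u} = {w}"
proof -
  have f: "finite {u\<in>V. R x u}" using fin by auto
  have "w \<in> {u\<in>V. R x u}" using w r by auto
  moreover have "card {u\<in>V. R x u} \<le> 1" using deg x by auto
  ultimately show ?thesis using f card_le_Suc0_iff_eq[OF f] by auto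
qed

lemma closed_eq:
  assumes fin: "finite V" and sym: "\<forall>u v. R u v \<longrightarrow> R v u"
    and deg: "\<forall>v\<in>V. card {u\<in>V. R v u} \<le> 1"
    and x: "x \<in> V" and w: "w \<in> {v\<in>V. v = x \<or> R x v}"
  shows "{v\<in>V. v = w \<or> R w v} = {v\<in>V. v = x \<or> R x v}"
proof (cases "w = x")
  case False
  then have wV: "w \<in> V" and r: "R x w" using w by auto
  have 1: "{u\<in>V. R x u} = {w}" by (rule nbhd_single[OF fin sym deg x wV r])
  have 2: "{u\<in>V. R w u} = {x}" by (rule nbhd_single[OF fin sym deg wV x]) (use sym r in auto)
  have "{v\<in>V. v = w \<or> R w v} = {w} \<union> {u\<in>V. R w u}" using wV by auto
  also have "\<dots> = {x} \<union> {u\<in>V. R x u}" using 1 2 by auto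
  also have "\<dots> = {v\<in>V. v = x \<or> R x v}" using x by auto
  finally show ?thesis .
qed simp

lemma matching_partition:
  assumes fin: "finite V" and sym: "\<forall>u v. R u v \<longrightarrow> R v u" and irr: "\<forall>v. \<not> R v v"
    and deg: "\<forall>v\<in>V. card {u\<in>V. R v u} \<le> 1"
  shows "\<exists>P. partition_on V P \<and> (\<forall>X\<in>P. card X = 1 \<or> card X = 2) \<and>
     (\<forall>u\<in>V. \<forall>X\<in>P. u \<in> X \<longrightarrow> X = {v\<in>V. v = u \<or> R u v}) \<and>
     (\<forall>u\<in>V. {v\<in>V. v = u \<or> R u v} \<in> P)"
proof -
  define B where "B u = {v\<in>V. v = u \<or> R u v}" for u
  have ce: "B w = B x" if "x \<in> V" "w \<in> B x" for x w
    using closed_eq[OF fin sym deg that(1)] that(2) unfolding B_def by blast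
  have sub: "B x \<subseteq> V" for x unfolding B_def by auto
  have mem: "x \<in> B x" if "x \<in> V" for x using that unfolding B_def by auto
  let ?P = "B ` V"
  have part: "partition_on V ?P"
  proof (rule partition_onI)
    show "\<Union>?P = V" using sub mem by blast
    show "{} \<notin> ?P" using mem by blast
    fix p q assume "p \<in> ?P" "q \<in> ?P" "p \<noteq> q"
    then obtain x y where xy: "x \<in> V" "y \<in> V" "p = B x" "q = B y" by auto
    show "disjnt p q"
    proof (rule ccontr)
      assume "\<not> disjnt p q"
      then obtain z where "z \<in> B x" "z \<in> B y" using xy unfolding disjnt_def by auto
      then have "B z = B x" "B z = B y" using ce[of x z] ce[of y z] xy by auto
      then show False using \<open>p \<noteq> q\<close> xy by simp
    qed
  qed
  have cards: "card X = 1 \<or> card X = 2" if XP: "X \<in> ?P" for X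
  proof -
    obtain x where x: "x \<in> V" "X = B x" using XP by auto
    show ?thesis
    proof (cases "\<exists>w\<in>V. R x w")
      case True
      then obtain w where w: "w \<in> V" "R x w" by auto
      have "{u\<in>V. R x u} = {w}" by (rule nbhd_single[OF fin sym deg x(1) w])
      then have "B x = {x, w}" using x(1) unfolding B_def by auto
      moreover have "x \<noteq> w" using irr w by auto
      ultimately show ?thesis using x by auto
    next
      case False
      then have "B x = {x}" using x(1) unfolding B_def by auto
      then show ?thesis using x by auto
    qed
  qed
  have blk: "\<forall>u\<in>V. \<forall>X\<in>?P. u \<in> X \<longrightarrow> X = B u"
  proof (intro ballI impI)
    fix u X assume "u \<in> V" "X \<in> ?P" "u \<in> X"
    then obtain x where "x \<in> V" "X = B x" by auto
    then show "X = B u" using ce[of x u] \<open>u \<in> X\<close> by simp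
  qed
  have all: "\<forall>u\<in>V. B u \<in> ?P" by simp
  have "partition_on V ?P \<and> (\<forall>X\<in>?P. card X = 1 \<or> card X = 2) \<and>
     (\<forall>u\<in>V. \<forall>X\<in>?P. u \<in> X \<longrightarrow> X = B u) \<and> (\<forall>u\<in>V. B u \<in> ?P)"
    using part cards blk all by blast
  then show ?thesis unfolding B_def[symmetric] by (intro exI[of _ ?P])
qed



lemma card_ge2:
  assumes "finite A" "y \<in> A" "z \<in> A" "y \<noteq> z"
  shows "card A \<ge> 2"
proof -
  have "card {y,z} \<le> card A" using assms by (intro card_mono) auto
  then show ?thesis using assms by auto
qed

lemma part_uniq:
  assumes "partition_on V P" "X \<in> P" "Y \<in> P" "u \<in> X" "u \<in> Y"
  shows "X = Y"
  using assms unfolding partition_on_def disjoint_def by blast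

lemma V_diss_iff:
  assumes sg: "simple_graph V E"
  shows "dissociation_set V E V \<longleftrightarrow> union_K1_K2 V E"
proof
  have fin: "finite V" and sym: "\<forall>u v. E u v \<longrightarrow> E v u" and irr: "\<forall>v. \<not> E v v"
    and inV: "\<forall>u v. E u v \<longrightarrow> u \<in> V \<and> v \<in> V"
    using sg unfolding simple_graph_def by auto
  assume "dissociation_set V E V"
  then have deg: "\<forall>v\<in>V. card {u\<in>V. E v u} \<le> 1" unfolding dissociation_set_def by auto
  obtain P where P: "partition_on V P" "\<forall>X\<in>P. card X = 1 \<or> card X = 2"
     "\<forall>u\<in>V. \<forall>X\<in>P. u \<in> X \<longrightarrow> X = {v\<in>V. v = u \<or> E u v}"
     "\<forall>u\<in>V. {v\<in>V. v = u \<or> E u v} \<in> P"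
    using matching_partition[OF fin sym irr deg] by blast
  have "E u v \<longleftrightarrow> (u \<noteq> v \<and> (\<exists>X\<in>P. u \<in> X \<and> v \<in> X))" if "u \<in> V" "v \<in> V" for u v
  proof
    assume e: "E u v"
    then show "u \<noteq> v \<and> (\<exists>X\<in>P. u \<in> X \<and> v \<in> X)"
      using P(4) that irr by (intro conjI bexI[of _ "{v\<in>V. v = u \<or> E u v}"]) auto
  next
    assume "u \<noteq> v \<and> (\<exists>X\<in>P. u \<in> X \<and> v \<in> X)"
    then obtain X where "X \<in> P" "u \<in> X" "v \<in> X" "u \<noteq> v" by auto
    then show "E u v" using P(3) that by auto
  qed
  then show "union_K1_K2 V E" unfolding union_K1_K2_def using P(1,2) by blast
next
  have fin: "finite V" and sym: "\<forall>u v. E u v \<longrightarrow> E v u" and irr: "\<forall>v. \<not> E v v"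
    and inV: "\<forall>u v. E u v \<longrightarrow> u \<in> V \<and> v \<in> V"
    using sg unfolding simple_graph_def by auto
  assume "union_K1_K2 V E"
  then obtain P where P: "partition_on V P" "\<forall>X\<in>P. card X = 1 \<or> card X = 2"
     "\<forall>u\<in>V. \<forall>v\<in>V. E u v \<longleftrightarrow> (u \<noteq> v \<and> (\<exists>X\<in>P. u \<in> X \<and> v \<in> X))"
    unfolding union_K1_K2_def by blast
  have "card {u\<in>V. E v u} \<le> 1" if v: "v \<in> V" for v
  proof -
    obtain X where X: "X \<in> P" "v \<in> X" using P(1) v unfolding partition_on_def by auto
    have XV: "X \<subseteq> V" using P(1) X unfolding partition_on_def by auto
    have "{u\<in>V. E v u} \<subseteq> X - {v}"
    proof
      fix u assume u: "u \<in> {u\<in>V. E v u}"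
      then obtain Y where Y: "Y \<in> P" "v \<in> Y" "u \<in> Y" "u \<noteq> v" using P(3) v by auto
      have "Y = X" using part_uniq[OF P(1) Y(1) X(1) Y(2) X(2)] .
      then show "u \<in> X - {v}" using Y by auto
    qed
    moreover have "finite X" using XV fin finite_subset by auto
    moreover have "card (X - {v}) \<le> 1" using P(2) X by auto
    ultimately show ?thesis using card_mono[of "X - {v}" "{u\<in>V. E v u}"] by simp
  qed
  then show "dissociation_set V E V" unfolding dissociation_set_def by auto
qed

lemma mp_iff:
  assumes sg: "simple_graph V E"
  shows "(\<forall>D. dissociation_set V E D \<longrightarrow> card D \<le> 2) \<longleftrightarrow> complete_multipartite_le2 V E"
proof
  have fin: "finite V" and sym: "\<forall>u v. E u v \<longrightarrow> E v u" and irr: "\<forall>v. \<not> E v v"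
    and inV: "\<forall>u v. E u v \<longrightarrow> u \<in> V \<and> v \<in> V"
    using sg unfolding simple_graph_def by auto
  assume H: "\<forall>D. dissociation_set V E D \<longrightarrow> card D \<le> 2"
  define R where "R u v = (u \<noteq> v \<and> \<not> E u v)" for u v
  have symR: "\<forall>u v. R u v \<longrightarrow> R v u" using sym unfolding R_def by auto
  have irrR: "\<forall>v. \<not> R v v" unfolding R_def by auto
  have deg: "\<forall>v\<in>V. card {u\<in>V. R v u} \<le> 1"
  proof (rule ccontr)
    assume "\<not> (\<forall>v\<in>V. card {u\<in>V. R v u} \<le> 1)"
    then obtain v where v: "v \<in> V" "\<not> card {u\<in>V. R v u} \<le> 1" by auto
    have "finite {u\<in>V. R v u}" using fin by auto
    then obtain a b where ab: "a \<in> {u\<in>V. R v u}" "b \<in> {u\<in>V. R v u}" "a \<noteq> b"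
      using v(2) card_le_Suc0_iff_eq by (metis One_nat_def)
    then have abV: "a \<in> V" "b \<in> V" "a \<noteq> v" "b \<noteq> v" "\<not> E v a" "\<not> E v b"
      unfolding R_def by auto
    let ?D = "{v,a,b}"
    have "dissociation_set V E ?D"
      unfolding dissociation_set_def
    proof (intro conjI ballI)
      show "?D \<subseteq> V" using v abV by auto
      fix x assume x: "x \<in> ?D"
      have "{u\<in>?D. E x u} \<subseteq> {}" if "x = v" using that abV irr by auto
      moreover have "{u\<in>?D. E x u} \<subseteq> {b}" if "x = a" using that abV irr sym by auto
      moreover have "{u\<in>?D. E x u} \<subseteq> {a}" if "x = b" using that abV irr sym by auto
      ultimately have "\<exists>y. {u\<in>?D. E x u} \<subseteq> {y}" using x by blast
      then obtain y where "{u\<in>?D. E x u} \<subseteq> {y}" by blast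
      then show "card {u\<in>?D. E x u} \<le> 1"
        using card_mono[of "{y}" "{u\<in>?D. E x u}"] by simp
    qed
    moreover have "card ?D = 3" using abV ab by auto
    ultimately show False using H by fastforce
  qed
  obtain P where P: "partition_on V P" "\<forall>X\<in>P. card X = 1 \<or> card X = 2"
     "\<forall>u\<in>V. \<forall>X\<in>P. u \<in> X \<longrightarrow> X = {v\<in>V. v = u \<or> R u v}"
     "\<forall>u\<in>V. {v\<in>V. v = u \<or> R u v} \<in> P"
    using matching_partition[OF fin symR irrR deg] by blast
  have "E u v \<longleftrightarrow> (\<exists>X\<in>P. u \<in> X \<and> v \<notin> X)" if "u \<in> V" "v \<in> V" for u v
  proof
    assume e: "E u v"
    then show "\<exists>X\<in>P. u \<in> X \<and> v \<notin> X"
      using P(4) that irr by (intro bexI[of _ "{v\<in>V. v = u \<or> R u v}"]) (auto simp: R_def)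
  next
    assume "\<exists>X\<in>P. u \<in> X \<and> v \<notin> X"
    then obtain X where "X \<in> P" "u \<in> X" "v \<notin> X" by auto
    then show "E u v" using P(3) that by (auto simp: R_def)
  qed
  moreover have "\<forall>X\<in>P. card X \<le> 2" using P(2) by auto
  ultimately show "complete_multipartite_le2 V E" unfolding complete_multipartite_le2_def using P(1) by blast
next
  have fin: "finite V" and sym: "\<forall>u v. E u v \<longrightarrow> E v u" and irr: "\<forall>v. \<not> E v v"
    and inV: "\<forall>u v. E u v \<longrightarrow> u \<in> V \<and> v \<in> V"
    using sg unfolding simple_graph_def by auto
  assume "complete_multipartite_le2 V E"
  then obtain P where P: "partition_on V P" "\<forall>X\<in>P. card X \<le> 2"
     "\<forall>u\<in>V. \<forall>v\<in>V. E u v \<longleftrightarrow> (\<exists>X\<in>P. u \<in> X \<and> v \<notin> X)"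
    unfolding complete_multipartite_le2_def by blast
  have blk: "E u v \<longleftrightarrow> v \<notin> X" if th: "u \<in> V" "v \<in> V" "X \<in> P" "u \<in> X" for u v X
  proof
    assume "E u v"
    then obtain Y where Y: "Y \<in> P" "u \<in> Y" "v \<notin> Y" using P(3) th by auto
    have "Y = X" using part_uniq[OF P(1) Y(1) th(3) Y(2) th(4)] .
    then show "v \<notin> X" using Y by auto
  next
    assume "v \<notin> X" then show "E u v" using P(3) th by auto
  qed
  show "\<forall>D. dissociation_set V E D \<longrightarrow> card D \<le> 2"
  proof (intro allI impI)
    fix D assume D: "dissociation_set V E D"
    have DV: "D \<subseteq> V" using D unfolding dissociation_set_def by auto
    have finD: "finite D" using DV fin finite_subset by auto
    have deg: "\<And>x. x \<in> D \<Longrightarrow> card {u\<in>D. E x u} \<le> 1" using D unfolding dissociation_set_def by auto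
    show "card D \<le> 2"
    proof (rule ccontr)
      assume "\<not> card D \<le> 2"
      then have "3 \<le> card D" by auto
      then obtain T where "T \<subseteq> D" "card T = 3" by (meson obtain_subset_with_card_n)
      then obtain a b c where abc: "a \<in> D" "b \<in> D" "c \<in> D" "a \<noteq> b" "b \<noteq> c" "a \<noteq> c"
        unfolding card_3_iff by auto
      have abcV: "a \<in> V" "b \<in> V" "c \<in> V" using abc DV by auto
      obtain X where X: "X \<in> P" "a \<in> X" using P(1) abcV unfolding partition_on_def by auto
      have finX: "finite X" using P(1) X fin unfolding partition_on_def
        by (meson Union_upper finite_subset)
      have two: "\<not> (2 \<le> card {u\<in>D. E x u})" if "x \<in> D" for x using deg[OF that] by auto
      show False
      proof (cases "b \<in> X")
        case bX: True
        show False
        proof (cases "c \<in> X")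
          case True
          have "card {a,b,c} \<le> card X" using finX X bX True by (intro card_mono) auto
          then show False using abc P(2) X by auto
        next
          case False
          have "E c a" using blk[OF abcV(1) abcV(3) X] False sym by auto
          moreover have "E c b" using blk[OF abcV(2) abcV(3) X(1) bX] False sym by auto
          ultimately show False using two[OF abc(3)] card_ge2[of "{u\<in>D. E c u}" a b] finD abc by auto
        qed
      next
        case nbX: False
        show False
        proof (cases "c \<in> X")
          case True
          have "E b a" using blk[OF abcV(1) abcV(2) X] nbX sym by auto
          moreover have "E b c" using blk[OF abcV(3) abcV(2) X(1) True] nbX sym by auto
          ultimately show False using two[OF abc(2)] card_ge2[of "{u\<in>D. E b u}" a c] finD abc by auto
        next
          case False
          have "E a b" using blk[OF abcV(1) abcV(2) X] nbX by auto
          moreover have "E a c" using blk[OF abcV(1) abcV(3) X] False by auto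
          ultimately show False using two[OF abc(1)] card_ge2[of "{u\<in>D. E a u}" b c] finD abc by auto
        qed
      qed
    qed
  qed
qed


lemma card_T:
  assumes fin: "finite V"
  shows "2 * card {D. D \<subseteq> V \<and> card D \<le> 2} = card V ^ 2 + card V + 2"
proof -
  let ?A = "\<lambda>k. {D. D \<subseteq> V \<and> card D = k}"
  have eq: "{D. D \<subseteq> V \<and> card D \<le> 2} = ?A 0 \<union> ?A 1 \<union> ?A 2" by auto
  have finA: "finite (?A k)" for k by (rule finite_subset[of _ "Pow V"]) (use fin in auto)
  have "card (?A 0 \<union> ?A 1 \<union> ?A 2) = card (?A 0) + card (?A 1) + card (?A 2)"
    using finA by (subst card_Un_disjoint, auto)+
  also have "\<dots> = 1 + card V + (card V choose 2)" using n_subsets[OF fin] by simp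
  finally have c: "card {D. D \<subseteq> V \<and> card D \<le> 2} = 1 + card V + (card V choose 2)" using eq by simp
  have "2 * (card V choose 2) = card V * (card V - 1)"
  proof (cases "card V")
    case (Suc m)
    have "even (Suc m * m)" by simp
    then show ?thesis using Suc by (simp add: choose_two)
  qed simp
  then show ?thesis using c by (cases "card V") (auto simp: power2_eq_square algebra_simps)
qed

theorem theorem2p1:
  fixes V :: "'a set" and E :: "'a \<Rightarrow> 'a \<Rightarrow> bool"
  assumes "simple_graph V E" and "card V \<ge> 1"
  shows "(real (card V ^ 2 + card V + 2) / 2 \<le> real (diss_count V E) \<and>
          diss_count V E \<le> 2 ^ card V)
       \<and> (real (diss_count V E) = real (card V ^ 2 + card V + 2) / 2
            \<longleftrightarrow> complete_multipartite_le2 V E)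
       \<and> (diss_count V E = 2 ^ card V \<longleftrightarrow> union_K1_K2 V E)"
proof -
  have sg: "simple_graph V E" by fact
  have fin: "finite V" using sg unfolding simple_graph_def by auto
  define S where "S = {D. dissociation_set V E D}"
  define T where "T = {D. D \<subseteq> V \<and> card D \<le> 2}"
  have dc: "diss_count V E = card S" unfolding S_def diss_count_def ..
  have SP: "S \<subseteq> Pow V" unfolding S_def dissociation_set_def by auto
  have finP: "finite (Pow V)" using fin by simp
  have finS: "finite S" using SP finP finite_subset by auto
  have TS: "T \<subseteq> S"
  proof
    fix D assume "D \<in> T"
    then have D: "D \<subseteq> V" "card D \<le> 2" unfolding T_def by auto
    have finD: "finite D" using D fin finite_subset by auto
    have "card {u\<in>D. E v u} \<le> 1" if v: "v \<in> D" for v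
    proof -
      have "{u\<in>D. E v u} \<subseteq> D - {v}" using sg unfolding simple_graph_def by auto
      then have "card {u\<in>D. E v u} \<le> card (D - {v})" using finD by (intro card_mono) auto
      also have "\<dots> = card D - 1" using v finD by simp
      finally show ?thesis using D by simp
    qed
    then show "D \<in> S" unfolding S_def dissociation_set_def using D by auto
  qed
  have cT: "2 * card T = card V ^ 2 + card V + 2" unfolding T_def by (rule card_T[OF fin])
  have rT: "real (card V ^ 2 + card V + 2) / 2 = real (card T)"
    using arg_cong[OF cT, of real] by simp
  have le1: "card T \<le> card S" using card_mono[OF finS TS] .
  have le2: "card S \<le> 2 ^ card V" using card_mono[OF finP SP] card_Pow[OF fin] by simp
  have eq1: "card S = card T \<longleftrightarrow> complete_multipartite_le2 V E"
  proof -
    have "card S = card T \<longleftrightarrow> S = T" using card_subset_eq[OF finS TS] by auto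
    also have "\<dots> \<longleftrightarrow> (\<forall>D. dissociation_set V E D \<longrightarrow> card D \<le> 2)"
      using TS unfolding S_def T_def dissociation_set_def by auto
    also have "\<dots> \<longleftrightarrow> complete_multipartite_le2 V E" by (rule mp_iff[OF sg])
    finally show ?thesis .
  qed
  have eq2: "card S = 2 ^ card V \<longleftrightarrow> union_K1_K2 V E"
  proof -
    have "card S = 2 ^ card V \<longleftrightarrow> S = Pow V"
      using card_subset_eq[OF finP SP] card_Pow[OF fin] by auto
    also have "\<dots> \<longleftrightarrow> dissociation_set V E V"
    proof
      assume "S = Pow V" then show "dissociation_set V E V" unfolding S_def by auto
    next
      assume H: "dissociation_set V E V"
      have "D \<in> S" if D: "D \<subseteq> V" for D
      proof -
        have "card {u\<in>D. E v u} \<le> 1" if v: "v \<in> D" for v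
        proof -
          have "card {u\<in>D. E v u} \<le> card {u\<in>V. E v u}"
            using D fin by (intro card_mono) auto
          also have "\<dots> \<le> 1" using H v D unfolding dissociation_set_def by auto
          finally show ?thesis .
        qed
        then show ?thesis unfolding S_def dissociation_set_def using D by auto
      qed
      then show "S = Pow V" using SP by auto
    qed
    also have "\<dots> \<longleftrightarrow> union_K1_K2 V E" by (rule V_diss_iff[OF sg])
    finally show ?thesis .
  qed
  show ?thesis unfolding dc rT using le1 le2 eq1 eq2 by auto
qed

end
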